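(* The collection $\mathcal Q_{tree}$ is UME-learnable.
   Context: Index the nodes of an infinite complete binary tree by $\mathbb N$ in level order: the root is $1$, and node $m$ has left child $2m$ and right child $2m+1$. For an infinite binary string $b=(b_1,b_2,\dots)\in\{0,1\}^{\mathbb N}$, its branch is the sequence of nodes $v_0(b)=1$, $v_j(b)=2v_{j-1}(b)+b_j$ for $j\ge1$. Let $q^{(b)}\in[0,1]^{\mathbb N}$ be given by $q^{(b)}_m=\tfrac23$ if $m=v_j(b)$ for some $j\ge0$ and $q^{(b)}_m=\tfrac13$ otherwise. $\mathcal Q_{tree}=\{\mathrm{Prod}(q^{(b)}):b\in\{0,1\}^{\mathbb N}\}$, where $\mathrm{Prod}(q)$ is the product measure on $\{0,1\}^{\mathbb N}$ with independent coordinates $X_m\sim\mathrm{Bernoulli}(q_m)$. A collection $\mathcal Q$ of probability measures on $\{0,1\}^{\mathbb N}$ is UME-learnable if there exist (measurable) estimators $\mathcal A_n:(\{0,1\}^{\mathbb N})^n\to[0,1]^{\mathbb N}$ such that for every $\mu\in\mathcal Q$, $\mathbb E_{S\sim\mu^n}\|\mathcal A_n(S)-\mathrm{Mean}(\mu)\|_\infty\to0$ as $n\to\infty$, where $S$ consists of $n$ i.i.d. draws from $\mu$ and $\mathrm{Mean}(\mu)_j=\mathbb E[X_j]$. *)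

theory Defs
  imports "HOL-Probability.Probability"
begin

definition cube :: "(nat \<Rightarrow> bool) measure" where
  "cube = PiM {1..} (\<lambda>_. count_space (UNIV :: bool set))"

definition Prod :: "(nat \<Rightarrow> real) \<Rightarrow> (nat \<Rightarrow> bool) measure" where
  "Prod q = PiM {1..} (\<lambda>m. measure_pmf (bernoulli_pmf (q m)))"

definition Mean :: "(nat \<Rightarrow> bool) measure \<Rightarrow> nat \<Rightarrow> real" where
  "Mean \<mu> j = (\<integral>x. (if x j then 1 else 0) \<partial>\<mu>)"

definition sample_space :: "nat \<Rightarrow> (nat \<Rightarrow> nat \<Rightarrow> bool) measure" where
  "sample_space n = PiM {..<n} (\<lambda>_. cube)"

definition UME_learnable :: "(nat \<Rightarrow> bool) measure set \<Rightarrow> bool" where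
  "UME_learnable Q \<longleftrightarrow>
     (\<exists>A :: nat \<Rightarrow> (nat \<Rightarrow> nat \<Rightarrow> bool) \<Rightarrow> nat \<Rightarrow> real.
        (\<forall>n j. j \<ge> 1 \<longrightarrow> (\<lambda>S. A n S j) \<in> borel_measurable (sample_space n)) \<and>
        (\<forall>n S j. S \<in> space (sample_space n) \<and> j \<ge> 1 \<longrightarrow> A n S j \<in> {0..1}) \<and>
        (\<forall>\<mu>\<in>Q. (\<lambda>n. \<integral>\<^sup>+ S. (\<Squnion>j\<in>{1..}. ennreal \<bar>A n S j - Mean \<mu> j\<bar>)
                            \<partial>(PiM {..<n} (\<lambda>_. \<mu>))) \<longlonglongrightarrow> 0))"

fun branch :: "(nat \<Rightarrow> bool) \<Rightarrow> nat \<Rightarrow> nat" where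
  "branch b 0 = 1"
| "branch b (Suc j) = 2 * branch b j + (if b (Suc j) then 1 else 0)"

definition qb :: "(nat \<Rightarrow> bool) \<Rightarrow> nat \<Rightarrow> real" where
  "qb b m = (if \<exists>j. m = branch b j then 2/3 else 1/3)"

definition Q_tree :: "(nat \<Rightarrow> bool) measure set" where
  "Q_tree = {Prod (qb b) | b. True}"

end

theory Submission
  imports Defs
begin
lemma prod_single:
  fixes q :: "nat \<Rightarrow> real" and f :: "nat \<Rightarrow> bool \<Rightarrow> ennreal"
  assumes q: "\<And>u. 0 \<le> q u" "\<And>u. q u \<le> 1" and PP: "finite P" "P \<subseteq> {1..}"
  shows "(\<integral>\<^sup>+x. (\<Prod>u\<in>P. f u (x u)) \<partial>Prod q) = (\<Prod>u\<in>P. f u True * ennreal (q u) + f u False * ennreal (1 - q u))"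
proof -
  let ?M = "\<lambda>m. measure_pmf (bernoulli_pmf (q m))"
  have P1: "u \<in> P \<Longrightarrow> Suc 0 \<le> u" for u using PP(2) by (auto simp: subset_eq)
  interpret product_prob_space ?M "{1..}" by (intro product_prob_spaceI prob_space_measure_pmf)

  have "(\<integral>\<^sup>+x. (\<Prod>u\<in>P. f u (x u)) \<partial>Prod q) = (\<integral>\<^sup>+x. (\<lambda>y. \<Prod>u\<in>P. f u (y u)) (restrict x P) \<partial>PiM {1..} ?M)"
    unfolding Prod_def by (intro nn_integral_cong prod.cong) auto
  also have "\<dots> = (\<integral>\<^sup>+y. (\<Prod>u\<in>P. f u (y u)) \<partial>distr (PiM {1..} ?M) (PiM P ?M) (\<lambda>x. restrict x P))"
    by (rule nn_integral_distr[symmetric]) (rule measurable_restrict_subset, use PP P1 in auto)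
  also have "\<dots> = (\<integral>\<^sup>+y. (\<Prod>u\<in>P. f u (y u)) \<partial>PiM P ?M)"
    by (subst distr_PiM_restrict_finite) (use PP P1 in auto)
  also have "\<dots> = (\<Prod>u\<in>P. integral\<^sup>N (?M u) (f u))"
    by (rule product_nn_integral_prod) (use PP P1 in auto)
  also have "\<dots> = (\<Prod>u\<in>P. f u True * ennreal (q u) + f u False * ennreal (1 - q u))"
    using q by (intro prod.cong refl) simp
  finally show ?thesis .
qed


lemma prob_Prod: "prob_space (Prod q)"
proof -
  interpret product_prob_space "\<lambda>m. measure_pmf (bernoulli_pmf (q m))" "{1..}"
    by (intro product_prob_spaceI prob_space_measure_pmf)
  show ?thesis unfolding Prod_def by (rule P.prob_space_axioms)
qed

lemma sets_Prod: "sets (Prod q) = sets cube"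
  unfolding Prod_def cube_def by (intro sets_PiM_cong) auto

lemma meas_comp: "(\<lambda>x. g (x u)) \<in> borel_measurable (Prod q)" if "u \<ge> 1"
  for g :: "bool \<Rightarrow> 'b::topological_space"
  unfolding Prod_def using that
  by (intro measurable_compose[OF measurable_component_singleton]) auto

lemma prod_sample:
  fixes q :: "nat \<Rightarrow> real" and f :: "nat \<Rightarrow> bool \<Rightarrow> ennreal"
  assumes q: "\<And>u. 0 \<le> q u" "\<And>u. q u \<le> 1" and PP: "finite P" "P \<subseteq> {1..}"
  shows "(\<integral>\<^sup>+S. (\<Prod>i<n. \<Prod>u\<in>P. f u (S i u)) \<partial>PiM {..<n} (\<lambda>_. Prod q)) = (\<Prod>u\<in>P. f u True * ennreal (q u) + f u False * ennreal (1 - q u)) ^ n"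
proof -
  have m: "(\<lambda>x. \<Prod>u\<in>P. f u (x u)) \<in> borel_measurable (Prod q)"
    by (intro borel_measurable_prod_ennreal meas_comp) (use PP in auto)
  note s = prod_single[OF q PP, where f=f]
  interpret product_prob_space "\<lambda>_. Prod q" "{..<n}"
    by (intro product_prob_spaceI prob_Prod)
  have "(\<integral>\<^sup>+S. (\<Prod>i<n. \<Prod>u\<in>P. f u (S i u)) \<partial>PiM {..<n} (\<lambda>_. Prod q)) = (\<Prod>i<n. \<integral>\<^sup>+x. (\<Prod>u\<in>P. f u (x u)) \<partial>Prod q)"
    by (rule product_nn_integral_prod) (use PP m in auto)
  also have "\<dots> = (\<Prod>u\<in>P. f u True * ennreal (q u) + f u False * ennreal (1 - q u)) ^ n"
    by (simp only: s prod_constant card_lessThan)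
  finally show ?thesis .
qed

lemma branch_bounds: "2^k \<le> branch b k \<and> branch b k < 2^(Suc k)"
  by (induction k) auto

lemma branch_pos: "1 \<le> branch b k"
  using branch_bounds[of k b] by (meson le_trans one_le_power one_le_numeral)

lemma branch_div: "branch b (k + s) div 2^s = branch b k"
proof (induction s)
  case (Suc s)
  have e: "branch b (k + Suc s) div 2 = branch b (k + s)" by simp
  have "branch b (k + Suc s) div 2^Suc s = (branch b (k + Suc s) div 2) div 2^s"
    by (simp only: power_Suc div_mult2_eq)
  then show ?case using Suc e by simp
qed simp

lemma branch_mono: "strict_mono (branch b)"
proof (rule strict_monoI_Suc)
  fix k show "branch b k < branch b (Suc k)" using branch_pos[of b k] by simp
qed

definition W :: "nat \<Rightarrow> nat set" where
  "W m = {m * 2^(m-1) ..< (m+1) * 2^(m-1)}"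

definition path :: "nat \<Rightarrow> nat \<Rightarrow> nat set" where
  "path m w = (\<lambda>t. w div 2^t) ` {..<m}"

lemma card_W: "card (W m) = 2^(m-1)"
  unfolding W_def by (simp add: algebra_simps)

lemma finite_W: "finite (W m)" unfolding W_def by simp

lemma finite_path: "finite (path m w)" unfolding path_def by simp

lemma card_path: "card (path m w) \<le> m"
  unfolding path_def using card_image_le[of "{..<m}" "\<lambda>t. w div 2^t"] by simp

lemma W_div: "w \<in> W m \<Longrightarrow> w div 2^(m-1) = m"
  unfolding W_def by (auto intro!: div_nat_eqI simp: algebra_simps)

lemma W_iff: "w \<in> W m \<longleftrightarrow> w div 2^(m-1) = m"
proof
  assume "w div 2^(m-1) = m"
  then show "w \<in> W m" unfolding W_def
    by (metis atLeastLessThan_iff add.commute div_times_less_eq_dividend dividend_less_times_div mult.commute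
         mult_Suc_right plus_1_eq_Suc pos2 zero_less_power)
qed (rule W_div)

lemma path_pos: assumes "m \<ge> 1" "w \<in> W m" "u \<in> path m w" shows "1 \<le> u"
proof -
  obtain t where t: "t < m" "u = w div 2^t" using assms unfolding path_def by auto
  have e: "(2::nat)^(m-1) = 2^t * 2^(m-1-t)" using t by (simp add: power_add[symmetric])
  have "w div 2^(m-1) = (w div 2^t) div 2^(m - 1 - t)"
    by (simp only: e div_mult2_eq)
  then have "u div 2^(m-1-t) = m" using W_div[OF assms(2)] t by simp
  then show ?thesis using assms(1) by (metis div_0 le_zero_eq less_one not_le)
qed

lemma path_off:
  assumes "m \<ge> 1" "\<not> (\<exists>k. m = branch b k)" "w \<in> W m" "u \<in> path m w"
  shows "\<not> (\<exists>k. u = branch b k)"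
proof
  assume "\<exists>k. u = branch b k"
  then obtain k where k: "u = branch b k" by auto
  obtain t where t: "t < m" "u = w div 2^t" using assms unfolding path_def by auto
  have e: "(2::nat)^(m-1) = 2^t * 2^(m-1-t)" using t by (simp add: power_add[symmetric])
  have "w div 2^(m-1) = (w div 2^t) div 2^(m - 1 - t)"
    by (simp only: e div_mult2_eq)
  then have um: "u div 2^(m-1-t) = m" using W_div[OF assms(3)] t by simp
  show False
  proof (cases "m - 1 - t \<le> k")
    case True
    have "branch b (k - (m-1-t) + (m-1-t)) div 2^(m-1-t) = branch b (k - (m-1-t))"
      by (rule branch_div[of b "k - (m-1-t)" "m-1-t"])
    then show False using um k True assms(2) by (metis le_add_diff_inverse2)
  next
    case False
    have "branch b k < 2^(Suc k)" using branch_bounds by blast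
    also have "\<dots> \<le> 2^(m-1-t)" using False by (intro power_increasing) auto
    finally have "u div 2^(m-1-t) = 0" using k by simp
    then show False using um assms(1) by simp
  qed
qed

definition wt :: "(nat \<Rightarrow> bool) \<Rightarrow> nat \<Rightarrow> nat" where
  "wt b m = branch b ((SOME k. m = branch b k) + (m - 1))"

lemma wt_props:
  assumes "m = branch b k"
  shows "wt b m \<in> W m" "path m (wt b m) = (\<lambda>s. branch b (k + s)) ` {..<m}"
    "card (path m (wt b m)) = m"
proof -
  have inj: "inj (branch b)" using branch_mono strict_mono_imp_inj_on by blast
  have "(SOME k. m = branch b k) = k"
    using assms inj by (metis (mono_tags, lifting) injD someI)
  then have wt: "wt b m = branch b (k + (m - 1))" unfolding wt_def by simp
  show "wt b m \<in> W m" unfolding W_iff wt using branch_div assms by simp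
  have pm: "path m (wt b m) = (\<lambda>t. branch b (k + (m - 1 - t))) ` {..<m}"
    unfolding path_def wt
  proof (intro image_cong refl)
    fix t assume "t \<in> {..<m}"
    then have "k + (m - 1) = (k + (m - 1 - t)) + t" by auto
    then show "branch b (k + (m - 1)) div 2 ^ t = branch b (k + (m - 1 - t))"
      by (metis branch_div)
  qed
  also have "\<dots> = (\<lambda>s. branch b (k + s)) ` ((\<lambda>t. m - 1 - t) ` {..<m})"
    by (simp add: image_image)
  also have "(\<lambda>t. m - 1 - t) ` {..<m} = {..<m}"
  proof
    show "(\<lambda>t. m - 1 - t) ` {..<m} \<subseteq> {..<m}" by auto
    show "{..<m} \<subseteq> (\<lambda>t. m - 1 - t) ` {..<m}"
    proof
      fix s assume "s \<in> {..<m}"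
      then have "s = m - 1 - (m - 1 - s)" "m - 1 - s < m" by auto
      then show "s \<in> (\<lambda>t. m - 1 - t) ` {..<m}" by blast
    qed
  qed
  finally show pth: "path m (wt b m) = (\<lambda>s. branch b (k + s)) ` {..<m}" .
  have "inj_on (\<lambda>s. branch b (k + s)) {..<m}"
    using inj unfolding inj_on_def by (metis add_left_cancel UNIV_I)
  then show "card (path m (wt b m)) = m" unfolding pth by (simp add: card_image)
qed

definition Fv :: "bool \<Rightarrow> real" where "Fv x = (if x then 9/4 else 1)"
definition Gv :: "bool \<Rightarrow> real" where "Gv x = (if x then 1 else 9/4)"
definition sc :: "(bool \<Rightarrow> real) \<Rightarrow> nat \<Rightarrow> nat set \<Rightarrow> (nat \<Rightarrow> nat \<Rightarrow> bool) \<Rightarrow> real" where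
  "sc \<phi> n P S = (\<Prod>i<n. \<Prod>u\<in>P. \<phi> (S i u))"
definition test :: "nat \<Rightarrow> nat \<Rightarrow> (nat \<Rightarrow> nat \<Rightarrow> bool) \<Rightarrow> bool" where
  "test n m S = (\<exists>w\<in>W m. (3/2)^(n*m) \<le> sc Fv n (path m w) S)"
definition est :: "nat \<Rightarrow> (nat \<Rightarrow> nat \<Rightarrow> bool) \<Rightarrow> nat \<Rightarrow> real" where
  "est n S j = (if test n j S then 2/3 else 1/3)"

lemma meas_SS: "i < n \<Longrightarrow> 1 \<le> u \<Longrightarrow> (\<lambda>S. g (S i u)) \<in> borel_measurable (sample_space n)"
  for g :: "bool \<Rightarrow> real"
  unfolding sample_space_def cube_def
  by (intro measurable_compose[OF measurable_component_singleton[of i]]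
        measurable_compose[OF measurable_component_singleton[of u]]) auto

lemma meas_sc: "P \<subseteq> {1..} \<Longrightarrow> (\<lambda>S. sc \<phi> n P S) \<in> borel_measurable (sample_space n)"
  unfolding sc_def by (intro borel_measurable_prod meas_SS) auto

lemma meas_est: assumes "1 \<le> j" shows "(\<lambda>S. est n S j) \<in> borel_measurable (sample_space n)"
proof -
  have [measurable]: "w \<in> W j \<Longrightarrow> (\<lambda>S. sc Fv n (path j w) S) \<in> borel_measurable (sample_space n)" for w
    by (rule meas_sc) (use path_pos assms in auto)
  have "Measurable.pred (sample_space n) (\<lambda>S. test n j S)"
    unfolding test_def by (intro pred_intros_finite(4) finite_W) measurable
  then show ?thesis unfolding est_def by measurable
qed

lemma sets_sample: "sets (PiM {..<n} (\<lambda>_. Prod q)) = sets (sample_space n)"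
  unfolding sample_space_def by (intro sets_PiM_cong refl sets_Prod)

lemma meas_transfer: "f \<in> borel_measurable (sample_space n) \<Longrightarrow> f \<in> borel_measurable (PiM {..<n} (\<lambda>_. Prod q))"
  using measurable_cong_sets[OF sets_sample[symmetric] refl] by blast

lemma qb_range: "0 \<le> qb b u" "qb b u \<le> 1"
  unfolding qb_def by auto

lemma Mean_Prod:
  assumes q: "\<And>u. 0 \<le> q u" "\<And>u. q u \<le> 1" and j: "1 \<le> j"
  shows "Mean (Prod q) j = q j"
proof -
  have m: "(\<lambda>x. if x j then 1 else 0 :: real) \<in> borel_measurable (Prod q)"
    using meas_comp[OF j, where q=q and g="\<lambda>y. if y then 1 else 0 :: real"] by simp
  have "Mean (Prod q) j = enn2real (\<integral>\<^sup>+x. ennreal (if x j then 1 else 0) \<partial>Prod q)"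
    unfolding Mean_def by (rule integral_eq_nn_integral[OF m]) auto
  also have "(\<integral>\<^sup>+x. ennreal (if x j then 1 else 0) \<partial>Prod q)
      = (\<integral>\<^sup>+x. (\<Prod>u\<in>{j}. (\<lambda>u y. ennreal (if y then 1 else 0)) u (x u)) \<partial>Prod q)"
    by simp
  also have "\<dots> = ennreal (q j)"
    by (subst prod_single[OF q]) (use j in auto)
  finally show ?thesis using q by simp
qed

lemma sc_nonneg: "(\<And>x. 0 \<le> \<phi> x) \<Longrightarrow> 0 \<le> sc \<phi> n P S"
  unfolding sc_def by (intro prod_nonneg) auto

lemma sc_pos: "(\<And>x. 0 < \<phi> x) \<Longrightarrow> 0 < sc \<phi> n P S"
  unfolding sc_def by (intro prod_pos) auto

lemma sc_FG: "finite P \<Longrightarrow> sc Fv n P S * sc Gv n P S = ((3/2)^(card P * n)) * (3/2)^(card P * n)"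
proof -
  assume "finite P"
  have "sc Fv n P S * sc Gv n P S = (\<Prod>i<n. \<Prod>u\<in>P. Fv (S i u) * Gv (S i u))"
    unfolding sc_def by (simp add: prod.distrib)
  also have "\<dots> = (\<Prod>i<n. \<Prod>u\<in>P. (9/4::real))"
    by (intro prod.cong refl) (simp add: Fv_def Gv_def)
  also have "\<dots> = ((9/4::real) ^ card P) ^ n" by simp
  also have "\<dots> = ((3/2)^2)^(card P * n)" by (simp add: power_mult power2_eq_square)
  also have "\<dots> = ((3/2)^(card P * n)) * (3/2)^(card P * n)"
    by (metis power_mult mult.commute power2_eq_square)
  finally show ?thesis .
qed

definition bnd :: "(nat \<Rightarrow> bool) \<Rightarrow> nat \<Rightarrow> nat \<Rightarrow> (nat \<Rightarrow> nat \<Rightarrow> bool) \<Rightarrow> real" where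
  "bnd b n j S = (if \<exists>k. j = branch b k then sc Gv n (path j (wt b j)) S
                  else (\<Sum>w\<in>W j. sc Fv n (path j w) S)) / (3/2)^(n*j)"

lemma Fv_pos: "0 < Fv x" unfolding Fv_def by auto
lemma Gv_pos: "0 < Gv x" unfolding Gv_def by auto

lemma bnd_nonneg: "0 \<le> bnd b n j S"
proof -
  have a: "0 \<le> sc Fv n P S" for P by (rule sc_nonneg) (simp add: less_imp_le[OF Fv_pos])
  have c: "0 \<le> sc Gv n P S" for P by (rule sc_nonneg) (simp add: less_imp_le[OF Gv_pos])
  show ?thesis unfolding bnd_def using a c by (auto intro!: divide_nonneg_pos sum_nonneg)
qed

lemma pointwise:
  assumes j: "1 \<le> j"
  shows "\<bar>est n S j - qb b j\<bar> \<le> bnd b n j S / 3"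
proof (cases "\<exists>k. j = branch b k")
  case True
  then obtain k where k: "j = branch b k" by auto
  have qb: "qb b j = 2/3" using True unfolding qb_def by auto
  show ?thesis
  proof (cases "test n j S")
    case True
    then show ?thesis using qb bnd_nonneg[of b n j S] unfolding est_def by simp
  next
    case False
    let ?P = "path j (wt b j)"
    let ?c = "(3/2::real)^(n*j)"
    have lt: "sc Fv n ?P S < ?c" using False wt_props(1)[OF k] unfolding test_def by force
    have eq: "sc Fv n ?P S * sc Gv n ?P S = ?c * ?c"
      using sc_FG[OF finite_path, of n j "wt b j" S] wt_props(3)[OF k] by (simp add: mult.commute)
    have Fp: "0 < sc Fv n ?P S" by (rule sc_pos[OF Fv_pos])
    have cp: "0 < ?c" by simp
    have "?c \<le> sc Gv n ?P S"
    proof (rule ccontr)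
      assume "\<not> ?c \<le> sc Gv n ?P S"
      then have "sc Gv n ?P S < ?c" by simp
      then have "sc Fv n ?P S * sc Gv n ?P S < sc Fv n ?P S * ?c" using Fp by simp
      also have "\<dots> < ?c * ?c" using lt cp by simp
      finally show False using eq by simp
    qed
    then have "1 \<le> bnd b n j S" using \<open>\<exists>k. j = branch b k\<close> cp unfolding bnd_def by simp
    then show ?thesis using False qb unfolding est_def by simp
  qed
next
  case False
  have qb: "qb b j = 1/3" using False unfolding qb_def by auto
  show ?thesis
  proof (cases "test n j S")
    case False
    then show ?thesis using qb bnd_nonneg[of b n j S] unfolding est_def by simp
  next
    case True
    let ?c = "(3/2::real)^(n*j)"
    obtain w where w: "w \<in> W j" "?c \<le> sc Fv n (path j w) S" using True unfolding test_def by auto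
    have "sc Fv n (path j w) S \<le> (\<Sum>w\<in>W j. sc Fv n (path j w) S)"
      by (rule member_le_sum[OF w(1) _ finite_W]) (rule sc_nonneg, use Fv_pos in \<open>simp add: less_imp_le\<close>)
    then have "1 \<le> bnd b n j S" using False w unfolding bnd_def by simp
    then show ?thesis using True qb unfolding est_def by simp
  qed
qed

lemma E_sc:
  assumes PP: "finite P" "P \<subseteq> {1..}" and qP: "\<And>u. u \<in> P \<Longrightarrow> qb b u = p"
    and p: "0 \<le> p" "p \<le> 1" and \<phi>: "\<And>x. 0 \<le> \<phi> x"
  shows "(\<integral>\<^sup>+S. ennreal (sc \<phi> n P S) \<partial>PiM {..<n} (\<lambda>_. Prod (qb b)))
         = ennreal ((\<phi> True * p + \<phi> False * (1-p))^(card P * n))"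
proof -
  have e1: "ennreal (\<Prod>u\<in>P. \<phi> (S i u)) = (\<Prod>u\<in>P. ennreal (\<phi> (S i u)))" for S i
    by (rule prod_ennreal[symmetric]) (rule \<phi>)
  have e2: "ennreal (sc \<phi> n P S) = (\<Prod>i<n. ennreal (\<Prod>u\<in>P. \<phi> (S i u)))" for S
    unfolding sc_def by (rule prod_ennreal[symmetric]) (intro prod_nonneg \<phi>)
  have "(\<integral>\<^sup>+S. ennreal (sc \<phi> n P S) \<partial>PiM {..<n} (\<lambda>_. Prod (qb b)))
      = (\<integral>\<^sup>+S. (\<Prod>i<n. \<Prod>u\<in>P. (\<lambda>u x. ennreal (\<phi> x)) u (S i u)) \<partial>PiM {..<n} (\<lambda>_. Prod (qb b)))"
    by (simp only: e1 e2)
  also have "\<dots> = (\<Prod>u\<in>P. ennreal (\<phi> True) * ennreal (qb b u) + ennreal (\<phi> False) * ennreal (1 - qb b u)) ^ n"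
    by (rule prod_sample[OF qb_range PP])
  also have "\<dots> = (\<Prod>u\<in>P. ennreal (\<phi> True * p + \<phi> False * (1-p))) ^ n"
  proof (intro arg_cong[where f="\<lambda>x. x ^ n"] prod.cong refl)
    fix u assume "u \<in> P"
    then have q: "qb b u = p" by (rule qP)
    have a: "0 \<le> \<phi> True * p" "0 \<le> \<phi> False * (1-p)" using p \<phi> by auto
    show "ennreal (\<phi> True) * ennreal (qb b u) + ennreal (\<phi> False) * ennreal (1 - qb b u)
        = ennreal (\<phi> True * p + \<phi> False * (1-p))"
      unfolding q ennreal_plus[OF a] using p \<phi> by (simp add: ennreal_mult)
  qed
  also have "\<dots> = ennreal ((\<phi> True * p + \<phi> False * (1-p))^(card P * n))"
  proof -
    have nn: "0 \<le> \<phi> True * p + \<phi> False * (1-p)" using p \<phi> by auto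
    show ?thesis by (simp only: prod_constant ennreal_power[OF nn] power_mult[symmetric] ennreal_power[OF zero_le_power[OF nn]])
  qed
  finally show ?thesis .
qed

lemma real_calc1: "(17/12::real)^(j*n) / (3 * (3/2)^(n*j)) = (17/18)^(n*j) / 3"
proof -
  have d: "(17/12::real)/(3/2) = 17/18" by simp
  have "(17/18::real)^(n*j) = (17/12)^(n*j) / (3/2)^(n*j)"
    by (metis d power_divide)
  then show ?thesis by (simp add: mult.commute)
qed

lemma real_calc2: "(17/18::real)^(n*j) = ((17/18)^n)^j" by (simp add: power_mult)

lemma E_bnd:
  assumes j: "1 \<le> j"
  shows "(\<integral>\<^sup>+S. ennreal (bnd b n j S / 3) \<partial>PiM {..<n} (\<lambda>_. Prod (qb b)))
           \<le> ennreal ((2 * (17/18)^n)^j / 3)"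
proof -
  let ?c = "(3/2::real)^(n*j)"
  let ?M = "PiM {..<n} (\<lambda>_. Prod (qb b))"
  have cp: "0 < ?c" by simp
  have Fn: "\<And>x. 0 \<le> Fv x" and Gn: "\<And>x. 0 \<le> Gv x" using Fv_pos Gv_pos less_imp_le by blast+
  have key: "(17/18::real)^(n*j) / 3 \<le> (2 * (17/18)^n)^j / 3"
  proof -
    have "((17/18::real)^n)^j \<le> 2^j * ((17/18)^n)^j"
    proof -
      have h1: "1 \<le> (2::real)^j" by simp
      have h2: "0 \<le> ((17/18::real)^n)^j" by simp
      show ?thesis using mult_right_mono[OF h1 h2] by simp
    qed
    then show ?thesis by (simp add: real_calc2 power_mult_distrib)
  qed
  show ?thesis
  proof (cases "\<exists>k. j = branch b k")
    case True
    then obtain k where k: "j = branch b k" by auto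
    let ?P = "path j (wt b j)"
    have Pon: "u \<in> ?P \<Longrightarrow> qb b u = 2/3" for u
      using wt_props(2)[OF k] unfolding qb_def by auto
    have PP: "?P \<subseteq> {1..}" using path_pos[OF j wt_props(1)[OF k]] by auto
    have "(\<integral>\<^sup>+S. ennreal (bnd b n j S / 3) \<partial>?M) = (\<integral>\<^sup>+S. ennreal (sc Gv n ?P S) * ennreal (1 / (3 * ?c)) \<partial>?M)"
    proof (intro nn_integral_cong)
      fix S
      have bT: "bnd b n j S / 3 = sc Gv n ?P S * (1 / (3 * ?c))" using True by (simp add: bnd_def)
      show "ennreal (bnd b n j S / 3) = ennreal (sc Gv n ?P S) * ennreal (1 / (3 * ?c))"
        unfolding bT by (rule ennreal_mult[OF sc_nonneg[OF Gn]]) simp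
    qed
    also have "\<dots> = (\<integral>\<^sup>+S. ennreal (sc Gv n ?P S) \<partial>?M) * ennreal (1 / (3 * ?c))"
      by (rule nn_integral_multc) (intro measurable_compose[OF _ measurable_ennreal] meas_transfer meas_sc PP)
    also have "\<dots> = ennreal ((17/12)^(j * n)) * ennreal (1 / (3 * ?c))"
      by (subst E_sc[OF finite_path PP Pon]) (auto simp: Gv_def wt_props(3)[OF k])
    also have "\<dots> = ennreal ((17/18)^(n*j) / 3)"
      using real_calc1[of j n] by (simp add: ennreal_mult[symmetric])
    also have "\<dots> \<le> ennreal ((2 * (17/18)^n)^j / 3)"
      using key by (rule ennreal_leI)
    finally show ?thesis .
  next
    case False
    have Poff: "w \<in> W j \<Longrightarrow> u \<in> path j w \<Longrightarrow> qb b u = 1/3" for u w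
      using path_off[OF j False, of w u] unfolding qb_def by presburger
    have PP: "w \<in> W j \<Longrightarrow> path j w \<subseteq> {1..}" for w using path_pos[OF j] by auto
    let ?r = "\<lambda>w. (17/12::real)^(card (path j w) * n) / (3 * ?c)"
    have "(\<integral>\<^sup>+S. ennreal (bnd b n j S / 3) \<partial>?M)
        = (\<integral>\<^sup>+S. (\<Sum>w\<in>W j. ennreal (sc Fv n (path j w) S) * ennreal (1 / (3 * ?c))) \<partial>?M)"
    proof (intro nn_integral_cong)
      fix S
      have bF: "bnd b n j S / 3 = (\<Sum>w\<in>W j. sc Fv n (path j w) S * (1 / (3 * ?c)))"
      proof -
        have "bnd b n j S / 3 = (\<Sum>w\<in>W j. sc Fv n (path j w) S) * (1 / (3 * ?c))"
          using False unfolding bnd_def by simp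
        then show ?thesis by (simp only: sum_distrib_right)
      qed
      have "ennreal (bnd b n j S / 3) = (\<Sum>w\<in>W j. ennreal (sc Fv n (path j w) S * (1 / (3 * ?c))))"
        unfolding bF
        by (rule sum_ennreal[of "W j" "\<lambda>w. sc Fv n (path j w) S * (1 / (3 * ?c))", symmetric])
           (rule mult_nonneg_nonneg[OF sc_nonneg[OF Fn]], simp)
      also have "\<dots> = (\<Sum>w\<in>W j. ennreal (sc Fv n (path j w) S) * ennreal (1 / (3 * ?c)))"
        by (rule sum.cong[OF refl], rule ennreal_mult[OF sc_nonneg[OF Fn]], simp)
      finally show "ennreal (bnd b n j S / 3) = (\<Sum>w\<in>W j. ennreal (sc Fv n (path j w) S) * ennreal (1 / (3 * ?c)))" .
    qed
    also have "\<dots> = (\<Sum>w\<in>W j. (\<integral>\<^sup>+S. ennreal (sc Fv n (path j w) S) * ennreal (1 / (3 * ?c)) \<partial>?M))"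
      by (rule nn_integral_sum) (intro borel_measurable_times_ennreal measurable_compose[OF _ measurable_ennreal] meas_transfer meas_sc PP, auto)
    also have "\<dots> = (\<Sum>w\<in>W j. ennreal (?r w))"
    proof (intro sum.cong refl)
      fix w assume w: "w \<in> W j"
      have "(\<integral>\<^sup>+S. ennreal (sc Fv n (path j w) S) * ennreal (1 / (3 * ?c)) \<partial>?M)
          = (\<integral>\<^sup>+S. ennreal (sc Fv n (path j w) S) \<partial>?M) * ennreal (1 / (3 * ?c))"
        by (rule nn_integral_multc) (intro measurable_compose[OF _ measurable_ennreal] meas_transfer meas_sc PP w)
      also have "\<dots> = ennreal ((17/12)^(card (path j w) * n)) * ennreal (1 / (3 * ?c))"
        by (subst E_sc[OF finite_path PP[OF w] Poff[OF w]]) (auto simp: Fv_def)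
      also have "\<dots> = ennreal (?r w)" by (simp add: ennreal_mult[symmetric])
      finally show "(\<integral>\<^sup>+S. ennreal (sc Fv n (path j w) S) * ennreal (1 / (3 * ?c)) \<partial>?M) = ennreal (?r w)" .
    qed
    also have "\<dots> = ennreal (\<Sum>w\<in>W j. ?r w)" by (rule sum_ennreal) simp
    also have "\<dots> \<le> ennreal ((2 * (17/18)^n)^j / 3)"
    proof (rule ennreal_leI)
      have "(\<Sum>w\<in>W j. ?r w) \<le> (\<Sum>w\<in>W j. (17/12::real)^(j * n) / (3 * ?c))"
      proof (rule sum_mono)
        fix w assume "w \<in> W j"
        have "card (path j w) * n \<le> j * n" by (simp add: card_path)
        then have "(17/12::real)^(card (path j w) * n) \<le> (17/12)^(j * n)"
          by (rule power_increasing) simp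
        then show "?r w \<le> (17/12::real)^(j * n) / (3 * ?c)"
          by (rule divide_right_mono) simp
      qed
      also have "\<dots> = 2^(j-1) * ((17/18)^(n*j) / 3)"
        by (simp only: sum_constant card_W real_calc1 of_nat_power of_nat_numeral)
      also have "\<dots> \<le> 2^j * ((17/18)^(n*j) / 3)"
      proof (rule mult_right_mono)
        show "(2::real)^(j-1) \<le> 2^j" by (rule power_increasing) auto
      qed simp
      also have "\<dots> = (2 * (17/18)^n)^j / 3"
        by (simp add: real_calc2 power_mult_distrib)
      finally show "(\<Sum>w\<in>W j. ?r w) \<le> (2 * (17/18)^n)^j / 3" .
    qed
    finally show ?thesis .
  qed
qed

lemma meas_bnd: assumes j: "1 \<le> j" shows "(\<lambda>S. bnd b n j S) \<in> borel_measurable (sample_space n)"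
proof (cases "\<exists>k. j = branch b k")
  case True
  then obtain k where k: "j = branch b k" by auto
  have PP: "path j (wt b j) \<subseteq> {1..}" using path_pos[OF j wt_props(1)[OF k]] by auto
  show ?thesis unfolding bnd_def using True
    by (simp, intro borel_measurable_divide meas_sc PP borel_measurable_const)
next
  case False
  have PP: "w \<in> W j \<Longrightarrow> path j w \<subseteq> {1..}" for w using path_pos[OF j] by auto
  show ?thesis unfolding bnd_def using False
    by (simp, intro borel_measurable_divide borel_measurable_sum meas_sc PP borel_measurable_const)
qed

lemma total_bound:
  fixes x :: real
  assumes x: "x = 2 * (17/18)^n" "x < 1"
  shows "(\<integral>\<^sup>+S. (\<Squnion>j\<in>{1..}. ennreal \<bar>est n S j - Mean (Prod (qb b)) j\<bar>) \<partial>PiM {..<n} (\<lambda>_. Prod (qb b)))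
     \<le> ennreal (x / (3 * (1 - x)))"
proof -
  let ?M = "PiM {..<n} (\<lambda>_. Prod (qb b))"
  have x0: "0 \<le> x" using x by simp
  have pw: "(\<Squnion>j\<in>{1..}. ennreal \<bar>est n S j - Mean (Prod (qb b)) j\<bar>) \<le> (\<Sum>k. ennreal (bnd b n (Suc k) S / 3))" for S
  proof (rule SUP_least)
    fix j :: nat assume "j \<in> {1..}"
    then have j: "1 \<le> j" by simp
    have "ennreal \<bar>est n S j - Mean (Prod (qb b)) j\<bar> \<le> ennreal (bnd b n j S / 3)"
      using pointwise[OF j, of n S b] Mean_Prod[OF qb_range j] by (intro ennreal_leI) simp
    also have "\<dots> = ennreal (bnd b n (Suc (j - 1)) S / 3)" using j by simp
    also have "\<dots> \<le> (\<Sum>k. ennreal (bnd b n (Suc k) S / 3))"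
      using sum_le_suminf[OF summableI, of "{j - 1}" "\<lambda>k. ennreal (bnd b n (Suc k) S / 3)"] by simp
    finally show "ennreal \<bar>est n S j - Mean (Prod (qb b)) j\<bar> \<le> (\<Sum>k. ennreal (bnd b n (Suc k) S / 3))" .
  qed
  have "(\<integral>\<^sup>+S. (\<Squnion>j\<in>{1..}. ennreal \<bar>est n S j - Mean (Prod (qb b)) j\<bar>) \<partial>?M)
      \<le> (\<integral>\<^sup>+S. (\<Sum>k. ennreal (bnd b n (Suc k) S / 3)) \<partial>?M)"
    by (intro nn_integral_mono pw)
  also have "\<dots> = (\<Sum>k. \<integral>\<^sup>+S. ennreal (bnd b n (Suc k) S / 3) \<partial>?M)"
    by (rule nn_integral_suminf)
      (intro measurable_compose[OF _ measurable_ennreal] borel_measurable_divide meas_transfer meas_bnd borel_measurable_const, simp)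
  also have "\<dots> \<le> (\<Sum>k. ennreal ((2 * (17/18)^n)^(Suc k) / 3))"
    by (intro suminf_le summableI E_bnd) simp
  also have "\<dots> = ennreal (x / (3 * (1 - x)))"
  proof -
    have "(\<lambda>k. x^k) sums (1 / (1 - x))" using x x0 by (intro geometric_sums) simp
    then have "(\<lambda>k. x / 3 * x^k) sums (x / 3 * (1 / (1 - x)))" by (rule sums_mult)
    then have s: "(\<lambda>k. x^(Suc k) / 3) sums (x / (3 * (1 - x)))" by (simp add: mult.commute)
    have "(\<lambda>k. ennreal (x^(Suc k) / 3)) sums ennreal (x / (3 * (1 - x)))"
      using s x x0 by (subst sums_ennreal) auto
    then show ?thesis using x(1) by (simp add: sums_iff)
  qed
  finally show ?thesis .
qed

theorem mainTheorem7:
  shows "UME_learnable Q_tree"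
  unfolding UME_learnable_def
proof (intro exI[of _ est] conjI allI impI ballI)
  fix n j :: nat assume "1 \<le> j"
  then show "(\<lambda>S. est n S j) \<in> borel_measurable (sample_space n)" by (rule meas_est)
next
  fix n S j show "est n S j \<in> {0..1}" unfolding est_def by auto
next
  fix \<mu> assume "\<mu> \<in> Q_tree"
  then obtain b where \<mu>: "\<mu> = Prod (qb b)" unfolding Q_tree_def by auto
  define x where "x n = 2 * (17/18::real)^n" for n
  have xl: "x \<longlonglongrightarrow> 0" unfolding x_def
    using tendsto_mult[OF tendsto_const LIMSEQ_power_zero[of "17/18::real"]] by simp
  then have ev: "eventually (\<lambda>n. x n < 1) sequentially"
    by (rule order_tendstoD) simp
  have hl: "(\<lambda>n. ennreal (x n / (3 * (1 - x n)))) \<longlonglongrightarrow> ennreal (0 / (3 * (1 - 0)))"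
    by (intro tendsto_ennrealI tendsto_intros xl) simp
  show "(\<lambda>n. \<integral>\<^sup>+ S. (\<Squnion>j\<in>{1..}. ennreal \<bar>est n S j - Mean \<mu> j\<bar>) \<partial>PiM {..<n} (\<lambda>_. \<mu>)) \<longlonglongrightarrow> 0"
  proof (rule tendsto_sandwich[OF _ _ tendsto_const])
    show "eventually (\<lambda>n. 0 \<le> (\<integral>\<^sup>+ S. (\<Squnion>j\<in>{1..}. ennreal \<bar>est n S j - Mean \<mu> j\<bar>) \<partial>PiM {..<n} (\<lambda>_. \<mu>))) sequentially"
      by simp
    show "eventually (\<lambda>n. (\<integral>\<^sup>+ S. (\<Squnion>j\<in>{1..}. ennreal \<bar>est n S j - Mean \<mu> j\<bar>) \<partial>PiM {..<n} (\<lambda>_. \<mu>))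
            \<le> ennreal (x n / (3 * (1 - x n)))) sequentially"
      using ev by eventually_elim (unfold \<mu>, rule total_bound, auto simp: x_def)
    show "(\<lambda>n. ennreal (x n / (3 * (1 - x n)))) \<longlonglongrightarrow> 0" using hl by simp
  qed
qed

end
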